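(* The following are equivalent: (a) the Collatz conjecture: $\sigma_\infty(n)<\infty$ for every positive integer $n$; (b) the space $\{h\in A(D):\mathcal{F}h=h\}$ of eigenvectors of $\mathcal{F}\in\mathcal{L}(A(D))$ for eigenvalue $1$ (together with $0$) has dimension $2$; (c) $\frac{z}{1-z}\in Z$; (d) $\lim_{n\to\infty}\mathcal{F}^n(z+z^2)=\frac{z}{1-z}$ in the topology of $A(D)$.
   Context: $T$ is the Collatz map $T(n)=\frac{3n+1}2$ ($n$ odd), $T(n)=\frac n2$ ($n$ even); for a positive integer $n$, $\sigma_\infty(n)$ is the least $k\ge0$ with $T^k(n)=1$ ($\infty$ if none). $D$ is the open unit disk, $A(D)$ the holomorphic functions on $D$ with the topology of uniform convergence on compact subsets. $\mathcal{F}$ is the operator on $A(D)$ given by $\mathcal{F}\big(\sum_{n\ge0}a_nz^n\big)=\sum_{n\ge0}a_nz^{2n}+\sum_{k\ge0}a_{3k+2}z^{2k+1}$. For $k\ge0$, $Pol_k(z)=\sum_{n\ge1:\,\sigma_\infty(n)=k}z^n$, and $Z$ is the closure in $A(D)$ of $\operatorname{span}\{Pol_k:k\ge0\}$. *)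

theory Defs
  imports "HOL-Analysis.Analysis" "HOL-Library.Extended_Nat" "HOL-Library.Function_Algebras"
begin

definition collatzT :: "nat \<Rightarrow> nat" where
  "collatzT n = (if odd n then (3 * n + 1) div 2 else n div 2)"

definition sigma_inf :: "nat \<Rightarrow> enat" where
  "sigma_inf n = (if \<exists>k. (collatzT ^^ k) n = 1
                  then enat (LEAST k. (collatzT ^^ k) n = 1) else \<infinity>)"

abbreviation diskD :: "complex set" where "diskD \<equiv> ball 0 1"

text \<open>Elements of A(D) are represented as functions holomorphic on D which
  vanish outside D (so that equality of functions is equality on D).\<close>
definition AD :: "(complex \<Rightarrow> complex) set" where
  "AD = {h. h holomorphic_on diskD \<and> (\<forall>z. z \<notin> diskD \<longrightarrow> h z = 0)}"

definition restrD :: "(complex \<Rightarrow> complex) \<Rightarrow> complex \<Rightarrow> complex" where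
  "restrD f = (\<lambda>z. if z \<in> diskD then f z else 0)"

definition tcoeff :: "(complex \<Rightarrow> complex) \<Rightarrow> nat \<Rightarrow> complex" where
  "tcoeff h n = (deriv ^^ n) h 0 / fact n"

definition opF :: "(complex \<Rightarrow> complex) \<Rightarrow> complex \<Rightarrow> complex" where
  "opF h = restrD (\<lambda>z. (\<Sum>n. tcoeff h n * z ^ (2 * n))
                       + (\<Sum>k. tcoeff h (3 * k + 2) * z ^ (2 * k + 1)))"

definition Pol :: "nat \<Rightarrow> complex \<Rightarrow> complex" where
  "Pol k = restrD (\<lambda>z. \<Sum>n. (if n \<ge> 1 \<and> sigma_inf n = enat k then z ^ n else 0))"

definition fscale :: "complex \<Rightarrow> (complex \<Rightarrow> complex) \<Rightarrow> complex \<Rightarrow> complex" where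
  "fscale c f = (\<lambda>z. c * f z)"

definition AD_closure :: "(complex \<Rightarrow> complex) set \<Rightarrow> (complex \<Rightarrow> complex) set" where
  "AD_closure S = {f \<in> AD. \<forall>K. compact K \<and> K \<subseteq> diskD \<longrightarrow>
       (\<forall>e>0. \<exists>g\<in>S. \<forall>z\<in>K. cmod (f z - g z) < e)}"

definition Zspace :: "(complex \<Rightarrow> complex) set" where
  "Zspace = AD_closure (module.span fscale (range Pol))"

end

theory Submission
  imports Defs "HOL-Complex_Analysis.Complex_Analysis"
begin


interpretation vs: vector_space fscale
  by unfold_locales (simp_all add: fscale_def fun_eq_iff distrib_left distrib_right)

definition bnd :: "(nat \<Rightarrow> complex) \<Rightarrow> bool" where
  "bnd a \<longleftrightarrow> (\<exists>B. \<forall>n. norm (a n) \<le> B)"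

definition ps :: "(nat \<Rightarrow> complex) \<Rightarrow> complex \<Rightarrow> complex" where
  "ps a = restrD (\<lambda>z. \<Sum>n. a n * z ^ n)"

lemma bnd_summable:
  assumes "bnd a" "norm z < 1"
  shows "summable (\<lambda>n. norm (a n * z ^ n))"
proof -
  obtain B where B: "\<And>n. norm (a n) \<le> B" using assms(1) bnd_def by auto
  have "summable (\<lambda>n. B * norm z ^ n)"
    using assms(2) by (intro summable_mult summable_geometric) auto
  then show ?thesis
    by (rule summable_comparison_test') (auto simp: norm_mult norm_power intro!: mult_right_mono B)
qed

lemma bnd_conv_radius: "bnd a \<Longrightarrow> conv_radius a \<ge> 1"
proof (rule conv_radius_geI_ex')
  fix r :: real assume "bnd a" "0 < r" "ereal r < 1"
  then show "summable (\<lambda>n. a n * of_real r ^ n)"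
    using bnd_summable[of a "of_real r"] summable_norm_cancel by auto
qed

lemma ps_eval: "ps a = restrD (eval_fps (Abs_fps a))"
  by (simp add: ps_def eval_fps_def[abs_def])

lemma ps_holo: assumes "bnd a" shows "ps a holomorphic_on diskD"
proof -
  have "eval_fps (Abs_fps a) holomorphic_on diskD"
  proof (rule holomorphic_on_eval_fps)
    have "ereal 1 \<le> fps_conv_radius (Abs_fps a)"
      using bnd_conv_radius[OF assms] by (simp add: fps_conv_radius_def one_ereal_def)
    then show "diskD \<subseteq> eball 0 (fps_conv_radius (Abs_fps a))"
      by (metis ball_eball_mono order_refl subset_trans eball_ereal[symmetric]) 
  qed
  moreover have "ps a holomorphic_on diskD \<longleftrightarrow> eval_fps (Abs_fps a) holomorphic_on diskD"
    by (rule holomorphic_cong) (auto simp: restrD_def ps_eval)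
  ultimately show ?thesis by simp
qed

lemma ps_AD: "bnd a \<Longrightarrow> ps a \<in> AD"
  using ps_holo by (auto simp: AD_def ps_def restrD_def)

lemma ps_fps: assumes "bnd a" shows "ps a has_fps_expansion Abs_fps a"
  unfolding has_fps_expansion_def
proof
  have "ereal 1 \<le> fps_conv_radius (Abs_fps a)"
    using bnd_conv_radius[OF assms] by (simp add: fps_conv_radius_def one_ereal_def)
  moreover have "(0::ereal) < ereal 1" by simp
  ultimately show "0 < fps_conv_radius (Abs_fps a)" by (metis less_le_trans)
  have "eventually (\<lambda>z. z \<in> diskD) (nhds 0)"
    by (intro eventually_nhds_in_open) auto
  then show "\<forall>\<^sub>F z in nhds 0. eval_fps (Abs_fps a) z = ps a z"
    by eventually_elim (auto simp: ps_eval restrD_def)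
qed

lemma tcoeff_ps: "bnd a \<Longrightarrow> tcoeff (ps a) n = a n"
  using fps_nth_fps_expansion[OF ps_fps, of a n] by (simp add: tcoeff_def)

lemma AD_sums: assumes "h \<in> AD" "z \<in> diskD"
  shows "(\<lambda>n. tcoeff h n * z ^ n) sums h z"
  using holomorphic_power_series[of h 0 1 z] assms by (simp add: AD_def tcoeff_def)

lemma ps_add: assumes "bnd a" "bnd b" shows "ps a + ps b = ps (\<lambda>n. a n + b n)"
proof (rule ext)
  fix z
  show "(ps a + ps b) z = ps (\<lambda>n. a n + b n) z"
  proof (cases "z \<in> diskD")
    case True
    then have "norm z < 1" by auto
    then have "summable (\<lambda>n. a n * z ^ n)" "summable (\<lambda>n. b n * z ^ n)"
      using summable_norm_cancel[OF bnd_summable[OF assms(1)]]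
        summable_norm_cancel[OF bnd_summable[OF assms(2)]] by auto
    then have "(\<Sum>n. a n * z ^ n) + (\<Sum>n. b n * z ^ n) = (\<Sum>n. a n * z ^ n + b n * z ^ n)"
      by (rule suminf_add)
    also have "\<dots> = (\<Sum>n. (a n + b n) * z ^ n)" by (simp add: distrib_right)
    finally show ?thesis
      unfolding plus_fun_apply ps_def restrD_def if_P[OF True] .
  next
    case False
    show ?thesis unfolding plus_fun_apply ps_def restrD_def if_not_P[OF False] by simp
  qed
qed

lemma ps_scale: assumes "bnd a" shows "fscale c (ps a) = ps (\<lambda>n. c * a n)"
proof -
  have "summable (\<lambda>n. a n * x ^ n)" if "cmod x < 1" for x
    by (rule summable_norm_cancel[OF bnd_summable[OF assms that]])
  then show ?thesis
    by (auto simp: fun_eq_iff fscale_def ps_def restrD_def suminf_mult[symmetric] mult.assoc)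
qed

lemma bnd_add: "bnd a \<Longrightarrow> bnd b \<Longrightarrow> bnd (\<lambda>n. a n + b n)"
  unfolding bnd_def by (meson add_mono norm_triangle_le)

lemma bnd_scale: "bnd a \<Longrightarrow> bnd (\<lambda>n. c * a n)"
  unfolding bnd_def by (metis mult_left_mono norm_ge_zero norm_mult)

lemma bnd01: "(\<And>n. norm (a n) \<le> 1) \<Longrightarrow> bnd a"
  unfolding bnd_def by blast

lemma ps_zero: "ps (\<lambda>n. 0) = 0"
  by (auto simp: ps_def restrD_def)



lemma split_sum:
  fixes f :: "nat \<Rightarrow> complex"
  assumes b: "\<And>m. norm (f m) \<le> C * q ^ m" and q: "0 \<le> q" "q < 1"
  shows "(\<Sum>m. f m) = (\<Sum>n. f (2*n)) + (\<Sum>n. f (2*n+1))"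
proof -
  have g: "summable (\<lambda>m. C * q ^ m)" using q by (intro summable_mult summable_geometric) auto
  have s: "summable f" by (rule summable_comparison_test'[OF g]) (use b in auto)
  have g2: "summable (\<lambda>n. C * (q^2) ^ n)" using q
    by (intro summable_mult summable_geometric) (auto simp: abs_square_less_1)
  have s1: "summable (\<lambda>n. f (2*n))"
  proof (rule summable_comparison_test'[OF g2])
    fix n show "norm (f (2*n)) \<le> C * (q^2)^n"
      using b[of "2*n"] by (simp add: power_mult)
  qed
  have g3: "summable (\<lambda>n. (C * q) * (q^2) ^ n)" using q
    by (intro summable_mult summable_geometric) (auto simp: abs_square_less_1)
  have s2: "summable (\<lambda>n. f (2*n+1))"
  proof (rule summable_comparison_test'[OF g3])
    fix n show "norm (f (2*n+1)) \<le> C * q * (q^2)^n"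
      using b[of "2*n+1"] by (simp add: power_mult mult.assoc)
  qed
  have 1: "(\<lambda>n. sum f {n * 2 ..< n * 2 + 2}) sums (\<Sum>m. f m)"
    by (rule sums_group) (use s summable_sums in auto)
  have 2: "(\<lambda>n. sum f {n * 2 ..< n * 2 + 2}) = (\<lambda>n. f (2*n) + f (2*n+1))"
    by (auto simp: numeral_2_eq_2 mult.commute)
  have 3: "(\<lambda>n. f (2*n) + f (2*n+1)) sums ((\<Sum>n. f (2*n)) + (\<Sum>n. f (2*n+1)))"
    by (intro sums_add summable_sums s1 s2)
  have 4: "(\<lambda>n. f (2*n) + f (2*n+1)) sums (\<Sum>m. f m)" using 1 unfolding 2 .
  show ?thesis by (rule sums_unique2[OF 4 3])
qed

lemma collatz_even [simp]: "collatzT (2*n) = n"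
  by (simp add: collatzT_def)

lemma collatz_odd [simp]: "collatzT (2*k+1) = 3*k+2"
  by (simp add: collatzT_def)

lemma collatz_odd' [simp]: "collatzT (Suc (2*k)) = 3*k+2"
  by (simp add: collatzT_def)

lemma collatz_le: "collatzT m \<le> 2*m"
  by (simp add: collatzT_def) (cases "m = 0", auto)



lemma bnd_comp: "bnd c \<Longrightarrow> bnd (\<lambda>m. c (g m))"
  unfolding bnd_def by auto

lemma opF_ps: assumes "bnd c" shows "opF (ps c) = ps (\<lambda>m. c (collatzT m))"
proof
  fix z
  show "opF (ps c) z = ps (\<lambda>m. c (collatzT m)) z"
  proof (cases "z \<in> diskD")
    case True
    obtain B where B: "\<And>n. norm (c n) \<le> B" using assms bnd_def by auto
    let ?f = "\<lambda>m. c (collatzT m) * z ^ m"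
    have "(\<Sum>m. ?f m) = (\<Sum>n. ?f (2*n)) + (\<Sum>n. ?f (2*n+1))"
    proof (rule split_sum[of ?f B "norm z"])
      fix m
      have "norm (?f m) = norm (c (collatzT m)) * norm z ^ m" by (simp add: norm_mult norm_power)
      also have "\<dots> \<le> B * norm z ^ m" by (rule mult_right_mono[OF B]) simp
      finally show "norm (?f m) \<le> B * norm z ^ m" .
    next
      show "0 \<le> norm z" by simp
      show "norm z < 1" using True by simp
    qed
    have eq: "tcoeff (ps c) = c" by (rule ext) (simp add: tcoeff_ps assms)
    have "opF (ps c) z = (\<Sum>n. c n * z^(2*n)) + (\<Sum>k. c (3*k+2) * z^(2*k+1))"
      unfolding opF_def restrD_def eq if_P[OF True] by (rule refl)
    also have "\<dots> = (\<Sum>m. ?f m)" using \<open>(\<Sum>m. ?f m) = _\<close> by simp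
    finally show ?thesis using True by (simp add: ps_def restrD_def)
  qed (simp add: opF_def ps_def restrD_def)
qed

lemma AD_coeff_bound:
  assumes "h \<in> AD"
  obtains C where "\<And>n. norm (tcoeff h n) \<le> C * 2 ^ n"
proof -
  have "(\<lambda>n. tcoeff h n * (1/2) ^ n) sums h (1/2)"
    using AD_sums[OF assms, of "1/2"] by simp
  then have "(\<lambda>n. tcoeff h n * (1/2) ^ n) \<longlonglongrightarrow> 0"
    using summable_LIMSEQ_zero sums_summable by blast
  then have "Bseq (\<lambda>n. tcoeff h n * (1/2) ^ n)" by (rule convergent_imp_Bseq[OF convergentI])
  then obtain K where K0: "\<forall>n. norm (tcoeff h n * (1/2) ^ n) \<le> K"
    by (meson BseqE)
  note K = K0[rule_format]
  have "norm (tcoeff h n) \<le> K * 2 ^ n" for n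
  proof -
    have "norm (tcoeff h n) = norm (tcoeff h n * (1/2) ^ n) * 2 ^ n"
      by (simp add: norm_mult norm_power power_one_over norm_divide)
    also have "\<dots> \<le> K * 2 ^ n" using K[of n] by (intro mult_right_mono) auto
    finally show ?thesis .
  qed
  then show ?thesis using that by blast
qed

lemma opF_coeff:
  assumes "h \<in> AD"
  shows "tcoeff (opF h) m = tcoeff h (collatzT m)"
proof -
  obtain C where C: "\<And>n. norm (tcoeff h n) \<le> C * 2 ^ n" using AD_coeff_bound assms by blast
  define b where "b m = tcoeff h (collatzT m)" for m
  have "norm (tcoeff h 0) \<le> C" using C[of 0] by simp
  then have C0: "C \<ge> 0" by (meson norm_ge_zero order_trans)
  have bb: "norm (b m) \<le> C * 4 ^ m" for m
  proof -
    have "norm (b m) \<le> C * 2 ^ collatzT m" using C by (simp add: b_def)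
    also have "\<dots> \<le> C * 2 ^ (2*m)"
      using collatz_le[of m] C0 by (intro mult_left_mono power_increasing) auto
    also have "\<dots> = C * 4 ^ m" by (simp add: power_mult)
    finally show ?thesis .
  qed
  have bz: "norm (b m * z ^ m) \<le> C * (4 * norm z) ^ m" for m z
  proof -
    have "norm (b m * z ^ m) = norm (b m) * norm z ^ m" by (simp add: norm_mult norm_power)
    also have "\<dots> \<le> C * 4 ^ m * norm z ^ m" by (rule mult_right_mono[OF bb]) simp
    also have "\<dots> = C * (4 * norm z) ^ m" by (simp add: power_mult_distrib)
    finally show ?thesis .
  qed
  have rad: "fps_conv_radius (Abs_fps b) \<ge> ereal (1/4)"
    unfolding fps_conv_radius_def fps_nth_Abs_fps
  proof (rule conv_radius_geI_ex')
    fix r :: real assume r: "0 < r" "ereal r < ereal (1/4)"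
    then have r': "r < 1/4" by (simp del: ereal_divide)
    have "summable (\<lambda>m. C * (4 * r) ^ m)" using r r' by (intro summable_mult summable_geometric) auto
    then show "summable (\<lambda>m. b m * of_real r ^ m)"
      by (rule summable_comparison_test') (use bz[of _ "of_real r"] r in auto)
  qed
  have exp: "opF h has_fps_expansion Abs_fps b"
    unfolding has_fps_expansion_def
  proof
    have "(0::ereal) < ereal (1/4)" by simp
    then show "0 < fps_conv_radius (Abs_fps b)" using rad by (rule less_le_trans)
    have "eventually (\<lambda>z. z \<in> ball 0 (1/8)) (nhds (0::complex))"
      by (intro eventually_nhds_in_open) auto
    then show "\<forall>\<^sub>F z in nhds 0. eval_fps (Abs_fps b) z = opF h z"
    proof eventually_elim
      case (elim z)
      then have z: "norm z < 1/8" by simp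
      let ?f = "\<lambda>m. b m * z ^ m"
      have "(\<Sum>m. ?f m) = (\<Sum>n. ?f (2*n)) + (\<Sum>n. ?f (2*n+1))"
      proof (rule split_sum[of ?f C "4 * norm z"])
        fix m show "norm (?f m) \<le> C * (4 * norm z) ^ m" by (rule bz)
      qed (use z in auto)
      moreover have "z \<in> diskD" using z by simp
      ultimately show ?case 
        by (simp add: eval_fps_def opF_def restrD_def b_def)
    qed
  qed
  show ?thesis using fps_nth_fps_expansion[OF exp, of m] by (simp add: tcoeff_def b_def)
qed



lemma T1 [simp]: "collatzT 1 = 2" by (simp add: collatzT_def)
lemma T2 [simp]: "collatzT 2 = 1" by (simp add: collatzT_def)
lemma T1' [simp]: "collatzT (Suc 0) = 2" by (simp add: collatzT_def)

lemma orbit1: "(collatzT ^^ j) 1 = 1 \<or> (collatzT ^^ j) 1 = 2"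
  by (induction j) auto

lemma T_zero_iff: "collatzT n = 0 \<longleftrightarrow> n = 0"
  by (cases "odd n") (auto simp: collatzT_def elim: oddE)

lemma Tpow_zero [simp]: "(collatzT ^^ j) 0 = 0"
  by (induction j) (auto simp: collatzT_def)

lemma Tpow_shift: "(collatzT ^^ j) (collatzT n) = (collatzT ^^ Suc j) n"
  by (simp only: funpow_Suc_right comp_def)

lemma sigma_fin: "sigma_inf n < \<infinity> \<longleftrightarrow> (\<exists>k. (collatzT ^^ k) n = 1)"
  by (simp add: sigma_inf_def)

definition dd :: "nat \<Rightarrow> complex" where "dd n = (if 1 \<le> n then 1 else 0)"
definition del0 :: "nat \<Rightarrow> complex" where "del0 n = (if n = 0 then 1 else 0)"
definition c12 :: "nat \<Rightarrow> complex" where "c12 n = (if n = 1 \<or> n = 2 then 1 else 0)"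

lemma bnd_dd: "bnd dd" by (rule bnd01) (simp add: dd_def)
lemma bnd_del0: "bnd del0" by (rule bnd01) (simp add: del0_def)
lemma bnd_c12: "bnd c12" by (rule bnd01) (simp add: c12_def)

lemma ps_dd_val: assumes "z \<in> diskD" shows "ps dd z = z / (1 - z)"
proof -
  have z: "norm z < 1" using assms by simp
  have "(\<lambda>n. z * z ^ n) sums (z * (1 / (1 - z)))"
    by (rule sums_mult) (rule geometric_sums[OF z])
  then have "(\<lambda>n. dd (Suc n) * z ^ (Suc n)) sums (z / (1 - z))"
    by (simp add: dd_def)
  then have "(\<lambda>n. dd n * z ^ n) sums (z / (1 - z) + dd 0 * z ^ 0)"
    by (subst (asm) sums_Suc_iff)
  then have "(\<lambda>n. dd n * z ^ n) sums (z / (1 - z))" by (simp add: dd_def)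
  then show ?thesis using assms by (simp add: ps_def restrD_def sums_iff)
qed

lemma ps_dd: "restrD (\<lambda>z. z / (1 - z)) = ps dd"
proof (rule ext)
  fix z show "restrD (\<lambda>z. z / (1 - z)) z = ps dd z"
    using ps_dd_val[of z] by (cases "z \<in> diskD") (auto simp: restrD_def ps_def)
qed

lemma ps_c12: "restrD (\<lambda>z. z + z ^ 2) = ps c12"
proof (rule ext)
  fix z :: complex
  have "(\<lambda>n. c12 n * z ^ n) sums (\<Sum>n\<in>{1,2}. c12 n * z ^ n)"
    by (rule sums_finite) (auto simp: c12_def)
  then have "(\<Sum>n. c12 n * z ^ n) = z + z ^ 2" by (simp add: sums_iff c12_def)
  then show "restrD (\<lambda>z. z + z ^ 2) z = ps c12 z"
    by (simp add: restrD_def ps_def)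
qed

lemma Fiter: "(opF ^^ m) (ps c12) = ps (\<lambda>n. c12 ((collatzT ^^ m) n))"
proof (induction m)
  case 0 then show ?case by simp
next
  case (Suc m)
  have b: "bnd (\<lambda>n. c12 ((collatzT ^^ m) n))" by (rule bnd_comp[OF bnd_c12])
  have "(opF ^^ Suc m) (ps c12) = opF (ps (\<lambda>n. c12 ((collatzT ^^ m) n)))"
    using Suc by simp
  also have "\<dots> = ps (\<lambda>n. c12 ((collatzT ^^ m) (collatzT n)))" by (rule opF_ps[OF b])
  also have "\<dots> = ps (\<lambda>n. c12 ((collatzT ^^ Suc m) n))" by (simp only: Tpow_shift)
  finally show ?case .
qed

lemma ps_diff: assumes "bnd a" "bnd b" "z \<in> diskD"
  shows "ps a z - ps b z = (\<Sum>n. (a n - b n) * z ^ n)"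
proof -
  have z: "norm z < 1" using assms by simp
  have "summable (\<lambda>n. a n * z ^ n)" "summable (\<lambda>n. b n * z ^ n)"
    using summable_norm_cancel[OF bnd_summable[OF assms(1) z]]
      summable_norm_cancel[OF bnd_summable[OF assms(2) z]] by auto
  then have "(\<Sum>n. a n * z ^ n) - (\<Sum>n. b n * z ^ n) = (\<Sum>n. a n * z ^ n - b n * z ^ n)"
    by (rule suminf_diff)
  also have "\<dots> = (\<Sum>n. (a n - b n) * z ^ n)" by (simp add: left_diff_distrib)
  finally show ?thesis using assms(3) by (simp add: ps_def restrD_def)
qed

lemma approx:
  fixes c :: "nat \<Rightarrow> nat \<Rightarrow> complex" and d :: "nat \<Rightarrow> complex"
  assumes c: "\<And>m n. norm (c m n) \<le> 1" and d: "\<And>n. norm (d n) \<le> 1"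
    and ev: "\<And>n. eventually (\<lambda>m. c m n = d n) sequentially"
    and r: "0 \<le> r" "r < 1"
  shows "uniform_limit (cball 0 r) (\<lambda>m. ps (c m)) (ps d) sequentially"
proof (rule uniform_limitI)
  fix e :: real assume e: "e > 0"
  have "(\<lambda>N. (2 / (1 - r)) * r ^ N) \<longlonglongrightarrow> (2 / (1 - r)) * 0"
    by (intro tendsto_mult tendsto_const LIMSEQ_power_zero) (use r in auto)
  then have "eventually (\<lambda>N. (2 / (1 - r)) * r ^ N < e) sequentially"
    using e by (intro order_tendstoD(2)) auto
  then obtain N where N: "(2 / (1 - r)) * r ^ N < e" by (meson eventually_sequentially order_refl)
  have "eventually (\<lambda>m. \<forall>n\<in>{..<N}. c m n = d n) sequentially"
    by (rule eventually_ball_finite) (use ev in auto)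
  then show "eventually (\<lambda>m. \<forall>z\<in>cball 0 r. dist (ps (c m) z) (ps d z) < e) sequentially"
  proof (rule eventually_mono)
    fix m assume agree: "\<forall>n\<in>{..<N}. c m n = d n"
    show "\<forall>z\<in>cball 0 r. dist (ps (c m) z) (ps d z) < e"
    proof
      fix z :: complex assume "z \<in> cball 0 r"
      then have zr: "norm z \<le> r" by simp
      then have zD: "z \<in> diskD" using r by simp
      define g where "g n = (if n < N then 0 else 2 * r ^ n)" for n
      have gs: "g sums ((2 / (1 - r)) * r ^ N)"
      proof -
        have "(\<lambda>i. (2 * r ^ N) * r ^ i) sums ((2 * r ^ N) * (1 / (1 - r)))"
          by (rule sums_mult) (rule geometric_sums, use r in auto)
        then have "(\<lambda>i. g (i + N)) sums ((2 / (1 - r)) * r ^ N)"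
          by (simp add: g_def power_add mult_ac)
        then have "g sums ((2 / (1 - r)) * r ^ N + (\<Sum>i<N. g i))"
          by (simp only: sums_iff_shift)
        moreover have "(\<Sum>i<N. g i) = 0" by (simp add: g_def)
        ultimately show ?thesis by simp
      qed
      have bound: "norm ((c m n - d n) * z ^ n) \<le> g n" for n
      proof (cases "n < N")
        case True then show ?thesis using agree by (simp add: g_def)
      next
        case False
        have "norm ((c m n - d n) * z ^ n) = norm (c m n - d n) * norm z ^ n"
          by (simp add: norm_mult norm_power)
        also have "\<dots> \<le> 2 * r ^ n"
        proof (rule mult_mono)
          show "norm (c m n - d n) \<le> 2"
            using norm_triangle_ineq4[of "c m n" "d n"] c[of m n] d[of n] by simp
          show "norm z ^ n \<le> r ^ n" using zr by (intro power_mono) auto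
        qed auto
        finally show ?thesis using False by (simp add: g_def)
      qed
      have "dist (ps (c m) z) (ps d z) = norm (\<Sum>n. (c m n - d n) * z ^ n)"
        using ps_diff[OF bnd01[OF c] bnd01[OF d] zD] by (simp add: dist_norm)
      also have "\<dots> \<le> suminf g"
        by (rule norm_suminf_le[OF bound]) (use gs in \<open>simp add: sums_iff\<close>)
      also have "\<dots> < e" using gs N by (simp add: sums_iff)
      finally show "dist (ps (c m) z) (ps d z) < e" .
    qed
  qed
qed

lemma coeff_diff:
  assumes a: "bnd a" and b: "bnd b" and e: "\<And>z. norm z = 1/2 \<Longrightarrow> norm (ps a z - ps b z) \<le> e"
  shows "norm (a n - b n) \<le> e * 2 ^ n"
proof -
  define g where "g z = ps a z - ps b z" for z
  have hD: "g holomorphic_on diskD" unfolding g_def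
    by (intro holomorphic_on_diff ps_holo a b)
  have sub: "cball (0::complex) (1/2) \<subseteq> diskD" by auto
  have h: "g holomorphic_on ball 0 (1/2)"
    by (rule holomorphic_on_subset[OF hD]) auto
  have cont: "continuous_on (cball 0 (1/2)) g"
    by (rule continuous_on_subset[OF holomorphic_on_imp_continuous_on[OF hD] sub])
  have "norm ((deriv ^^ n) g 0) \<le> fact n * e / (1/2) ^ n"
    by (rule Cauchy_inequality[OF h cont]) (use e in \<open>auto simp: g_def\<close>)
  moreover have "(deriv ^^ n) g 0 = (deriv ^^ n) (ps a) 0 - (deriv ^^ n) (ps b) 0"
    unfolding g_def by (rule higher_deriv_diff) (auto intro: ps_holo a b)
  moreover have "(deriv ^^ n) (ps a) 0 = a n * fact n" "(deriv ^^ n) (ps b) 0 = b n * fact n"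
    using tcoeff_ps[OF a, of n] tcoeff_ps[OF b, of n] by (auto simp: tcoeff_def field_simps)
  ultimately have "norm ((a n - b n) * fact n) \<le> fact n * e * 2 ^ n"
    by (simp add: left_diff_distrib power_one_over field_simps)
  then have "norm (a n - b n) * fact n \<le> e * 2 ^ n * fact n"
    by (simp add: norm_mult mult_ac)
  then show ?thesis by simp
qed

lemma ps_inj: "bnd a \<Longrightarrow> bnd b \<Longrightarrow> ps a = ps b \<Longrightarrow> a n = b n"
  using tcoeff_ps[of a n] tcoeff_ps[of b n] by simp

lemma span_ps:
  assumes x: "x \<in> vs.span S"
    and S: "\<And>y. y \<in> S \<Longrightarrow> \<exists>b. bnd b \<and> P b \<and> y = ps b"
    and P0: "P (\<lambda>n. 0)" and Pl: "\<And>c b b'. P b \<Longrightarrow> P b' \<Longrightarrow> P (\<lambda>n. c * b n + b' n)"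
  shows "\<exists>b. bnd b \<and> P b \<and> x = ps b"
  using x
proof (induction rule: vs.span_induct_alt)
  case base
  then show ?case using P0 ps_zero by (intro exI[of _ "\<lambda>n. 0"]) (auto simp: bnd_def)
next
  case (step c x y)
  obtain b where b: "bnd b" "P b" "x = ps b" using S step(1) by blast
  obtain b' where b': "bnd b'" "P b'" "y = ps b'" using step(2) by blast
  have "fscale c x + y = ps (\<lambda>n. c * b n + b' n)"
    using b b' by (simp add: ps_scale ps_add bnd_scale)
  then show ?case using b b' Pl bnd_add[OF bnd_scale[OF b(1)] b'(1)] by blast
qed

lemma compact_in_disk:
  assumes "compact K" "K \<subseteq> diskD"
  obtains r where "0 \<le> r" "r < 1" "K \<subseteq> cball 0 r"
proof (cases "K = {}")
  case True then show ?thesis using that[of 0] by auto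
next
  case False
  have "compact (norm ` K)"
    by (rule compact_continuous_image[OF continuous_on_norm_id assms(1)])
  then obtain x where "x \<in> K" "\<forall>y\<in>K. norm y \<le> norm x"
    using compact_attains_sup[of "norm ` K"] False by auto
  moreover have "norm x < 1" using \<open>x \<in> K\<close> assms(2) by auto
  moreover have "K \<subseteq> cball 0 (norm x)" using \<open>\<forall>y\<in>K. norm y \<le> norm x\<close> by auto
  ultimately show ?thesis using that[of "norm x"] by auto
qed



abbreviation CC :: bool where "CC \<equiv> (\<forall>n::nat. n \<ge> 1 \<longrightarrow> sigma_inf n < \<infinity>)"

lemma notCC: assumes "\<not> CC" obtains n0 where "n0 \<ge> 1" "\<And>k. (collatzT ^^ k) n0 \<noteq> 1"
  using assms sigma_fin by blast

lemma Tpow_add: "(collatzT ^^ (i + j)) n = (collatzT ^^ i) ((collatzT ^^ j) n)"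
  by (simp add: funpow_add)

lemma never2: assumes "\<And>k. (collatzT ^^ k) n0 \<noteq> 1" shows "(collatzT ^^ m) n0 \<noteq> 2"
proof
  assume "(collatzT ^^ m) n0 = 2"
  then have "(collatzT ^^ Suc m) n0 = 1" by simp
  then show False using assms by blast
qed

lemma c12_norm: "norm (c12 n) \<le> 1" by (simp add: c12_def)

lemma Fiter': "(opF ^^ m) (restrD (\<lambda>z. z + z ^ 2)) = ps (\<lambda>n. c12 ((collatzT ^^ m) n))"
  by (simp only: ps_c12 Fiter)

lemma d_fwd:
  assumes cc: CC and K: "compact K" "K \<subseteq> diskD"
  shows "uniform_limit K (\<lambda>m. (opF ^^ m) (restrD (\<lambda>z. z + z ^ 2))) (\<lambda>z. z / (1 - z)) sequentially"
proof -
  obtain r where r: "0 \<le> r" "r < 1" "K \<subseteq> cball 0 r" using compact_in_disk[OF K] by blast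
  have ev: "eventually (\<lambda>m. c12 ((collatzT ^^ m) n) = dd n) sequentially" for n
  proof (cases "n = 0")
    case True then show ?thesis by (simp add: c12_def dd_def)
  next
    case False
    then obtain k where k: "(collatzT ^^ k) n = 1" using cc sigma_fin by (meson less_one not_le)
    show ?thesis
    proof (rule eventually_sequentiallyI[of k])
      fix m assume "k \<le> m"
      then have "(collatzT ^^ m) n = (collatzT ^^ (m - k)) ((collatzT ^^ k) n)"
        by (metis Tpow_add le_add_diff_inverse2)
      then have "(collatzT ^^ m) n = 1 \<or> (collatzT ^^ m) n = 2" using k orbit1 by simp
      then show "c12 ((collatzT ^^ m) n) = dd n" using False by (auto simp: c12_def dd_def)
    qed
  qed
  have "uniform_limit (cball 0 r) (\<lambda>m. ps (\<lambda>n. c12 ((collatzT ^^ m) n))) (ps dd) sequentially"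
    by (rule approx[OF c12_norm _ ev r(1,2)]) (simp add: dd_def)
  then have "uniform_limit K (\<lambda>m. ps (\<lambda>n. c12 ((collatzT ^^ m) n))) (ps dd) sequentially"
    using r(3) by (rule uniform_limit_on_subset)
  moreover have "uniform_limit K (\<lambda>m. ps (\<lambda>n. c12 ((collatzT ^^ m) n))) (ps dd) sequentially
     \<longleftrightarrow> uniform_limit K (\<lambda>m. (opF ^^ m) (restrD (\<lambda>z. z + z ^ 2))) (\<lambda>z. z / (1 - z)) sequentially"
    by (rule uniform_limit_cong') (use K(2) ps_dd_val Fiter' in auto)
  ultimately show ?thesis by simp
qed

lemma d_bwd:
  assumes "\<not> CC"
  shows "\<not> (\<forall>K. compact K \<and> K \<subseteq> diskD \<longrightarrow>
             uniform_limit K (\<lambda>m. (opF ^^ m) (restrD (\<lambda>z. z + z ^ 2))) (\<lambda>z. z / (1 - z)) sequentially)"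
proof
  assume H: "\<forall>K. compact K \<and> K \<subseteq> diskD \<longrightarrow>
             uniform_limit K (\<lambda>m. (opF ^^ m) (restrD (\<lambda>z. z + z ^ 2))) (\<lambda>z. z / (1 - z)) sequentially"
  obtain n0 where n0: "n0 \<ge> 1" "\<And>k. (collatzT ^^ k) n0 \<noteq> 1" using notCC[OF assms] by blast
  have c1: "compact (cball (0::complex) (1/2))" by simp
  have c2: "cball (0::complex) (1/2) \<subseteq> diskD" by (rule cball_subset_ball_iff[THEN iffD2]) simp
  have UL: "uniform_limit (cball 0 (1/2)) (\<lambda>m. (opF ^^ m) (restrD (\<lambda>z. z + z ^ 2))) (\<lambda>z. z / (1 - z)) sequentially"
    using H[rule_format, OF conjI[OF c1 c2]] .
  define e :: real where "e = (1/2) ^ (Suc n0)"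
  have "e > 0" by (simp add: e_def)
  have "eventually (\<lambda>m. \<forall>z\<in>cball 0 (1/2). dist ((opF ^^ m) (restrD (\<lambda>z. z + z ^ 2)) z) (z / (1 - z)) < e) sequentially"
    by (rule uniform_limitD[OF UL \<open>e > 0\<close>])
  then obtain N where N: "\<And>m. m \<ge> N \<Longrightarrow> \<forall>z\<in>cball 0 (1/2). dist ((opF ^^ m) (restrD (\<lambda>z. z + z ^ 2)) z) (z / (1 - z)) < e"
    unfolding eventually_sequentially by blast
  define m where "m = N"
  have m: "\<forall>z\<in>cball 0 (1/2). dist ((opF ^^ m) (restrD (\<lambda>z. z + z ^ 2)) z) (z / (1 - z)) < e"
    using N[of m] by (simp add: m_def)
  let ?c = "\<lambda>n. c12 ((collatzT ^^ m) n)"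
  have "norm (?c n0 - dd n0) \<le> e * 2 ^ n0"
  proof (rule coeff_diff[OF bnd_comp[OF bnd_c12] bnd_dd])
    fix z :: complex assume z: "norm z = 1/2"
    then have "z \<in> cball 0 (1/2)" "z \<in> diskD" by auto
    then have "dist ((opF ^^ m) (restrD (\<lambda>z. z + z ^ 2)) z) (z / (1 - z)) < e" using m by blast
    then have "dist (ps ?c z) (ps dd z) < e" by (simp only: Fiter' ps_dd_val[OF \<open>z \<in> diskD\<close>])
    then show "norm (ps ?c z - ps dd z) \<le> e" by (simp add: dist_norm)
  qed
  moreover have "?c n0 = 0" using n0(2)[of m] never2[OF n0(2), of m] by (simp add: c12_def)
  moreover have "dd n0 = 1" using n0(1) by (simp add: dd_def)
  moreover have "e * 2 ^ n0 = 1/2" by (simp add: e_def power_one_over field_simps)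
  ultimately show False by simp
qed

definition pk :: "nat \<Rightarrow> nat \<Rightarrow> complex" where
  "pk k n = (if 1 \<le> n \<and> sigma_inf n = enat k then 1 else 0)"
definition cN :: "nat \<Rightarrow> nat \<Rightarrow> complex" where
  "cN N n = (if 1 \<le> n \<and> sigma_inf n < enat N then 1 else 0)"

lemma Pol_ps: "Pol k = ps (pk k)"
proof -
  have "\<And>z n. (if 1 \<le> n \<and> sigma_inf n = enat k then z ^ n else 0) = pk k n * z ^ n"
    by (simp add: pk_def)
  then show ?thesis by (simp add: Pol_def ps_def)
qed

lemma enat_less_Suc: "(x::enat) < enat (Suc N) \<longleftrightarrow> x < enat N \<or> x = enat N"
  by (cases x) auto

lemma cN_span: "ps (cN N) \<in> vs.span (range Pol)"
proof (induction N)
  case 0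
  have "cN 0 = (\<lambda>n. 0)" by (auto simp: cN_def fun_eq_iff zero_enat_def[symmetric])
  then have "ps (cN 0) = 0" using ps_zero by simp
  then show ?case by (simp only:) (rule vs.span_zero)
next
  case (Suc N)
  have "cN (Suc N) = (\<lambda>n. cN N n + pk N n)"
    by (auto simp: cN_def pk_def fun_eq_iff enat_less_Suc)
  then have "ps (cN (Suc N)) = ps (cN N) + Pol N"
    by (simp add: Pol_ps ps_add bnd01 cN_def pk_def)
  moreover have P: "Pol N \<in> vs.span (range Pol)"
    by (rule vs.span_base) (rule rangeI)
  ultimately show ?case using vs.span_add[OF Suc.IH P] by (simp only:)
qed

lemma c_fwd: assumes cc: CC shows "restrD (\<lambda>z. z / (1 - z)) \<in> Zspace"
  unfolding Zspace_def AD_closure_def ps_dd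
proof (rule CollectI, rule conjI)
  show "ps dd \<in> AD" by (rule ps_AD[OF bnd_dd])
  show "\<forall>K. compact K \<and> K \<subseteq> diskD \<longrightarrow>
          (\<forall>e>0. \<exists>g\<in>vs.span (range Pol). \<forall>z\<in>K. cmod (ps dd z - g z) < e)"
  proof (intro allI impI)
    fix K :: "complex set" and e :: real
    assume K: "compact K \<and> K \<subseteq> diskD" and e: "0 < e"
    obtain r where r: "0 \<le> r" "r < 1" "K \<subseteq> cball 0 r"
      by (rule compact_in_disk[OF conjunct1[OF K] conjunct2[OF K]])
    have ev: "eventually (\<lambda>m. cN m n = dd n) sequentially" for n
    proof (cases "n = 0")
      case True then show ?thesis by (simp add: cN_def dd_def)
    next
      case False
      then have "sigma_inf n < \<infinity>" using cc by simp
      then obtain j where j: "sigma_inf n = enat j" by (cases "sigma_inf n") auto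
      show ?thesis
      proof (rule eventually_sequentiallyI[of "Suc j"])
        fix m assume "Suc j \<le> m"
        then show "cN m n = dd n" using j False by (simp add: cN_def dd_def)
      qed
    qed
    have "uniform_limit (cball 0 r) (\<lambda>m. ps (cN m)) (ps dd) sequentially"
      by (rule approx[OF _ _ ev r(1,2)]) (simp_all add: cN_def dd_def)
    then have "eventually (\<lambda>m. \<forall>z\<in>cball 0 r. dist (ps (cN m) z) (ps dd z) < e) sequentially"
      by (rule uniform_limitD[OF _ e])
    then obtain N where N: "\<And>m. m \<ge> N \<Longrightarrow> \<forall>z\<in>cball 0 r. dist (ps (cN m) z) (ps dd z) < e"
      unfolding eventually_sequentially by blast
    have m: "\<forall>z\<in>cball 0 r. dist (ps (cN N) z) (ps dd z) < e" using N[of N] by simp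
    show "\<exists>g\<in>vs.span (range Pol). \<forall>z\<in>K. cmod (ps dd z - g z) < e"
    proof (rule bexI[where x="ps (cN N)"])
      show "ps (cN N) \<in> vs.span (range Pol)" by (rule cN_span)
      show "\<forall>z\<in>K. cmod (ps dd z - ps (cN N) z) < e"
      proof
        fix z assume "z \<in> K"
        then have "z \<in> cball 0 r" using r(3) by (rule subsetD[rotated])
        then have "dist (ps (cN N) z) (ps dd z) < e" using m by (rule bspec[rotated])
        then show "cmod (ps dd z - ps (cN N) z) < e" by (simp add: dist_norm norm_minus_commute)
      qed
    qed
  qed
qed

lemma c_bwd: assumes "\<not> CC" shows "restrD (\<lambda>z. z / (1 - z)) \<notin> Zspace"
proof
  assume Z: "restrD (\<lambda>z. z / (1 - z)) \<in> Zspace"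
  obtain n0 where n0: "n0 \<ge> 1" "\<And>k. (collatzT ^^ k) n0 \<noteq> 1" using notCC[OF assms] by blast
  have sig: "sigma_inf n0 = \<infinity>" using n0(2) by (simp add: sigma_inf_def)
  define e :: real where "e = (1/2) ^ (Suc n0)"
  have "e > 0" by (simp add: e_def)
  have "compact (cball (0::complex) (1/2)) \<and> cball (0::complex) (1/2) \<subseteq> diskD" by auto
  then obtain g where g: "g \<in> vs.span (range Pol)" and gz: "\<forall>z\<in>cball 0 (1/2). cmod (ps dd z - g z) < e"
    using Z \<open>e > 0\<close> unfolding Zspace_def AD_closure_def ps_dd by blast
  have "\<exists>b. bnd b \<and> b n0 = 0 \<and> g = ps b"
  proof (rule span_ps[OF g])
    fix y assume "y \<in> range Pol"
    then obtain k where "y = Pol k" by blast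
    then show "\<exists>b. bnd b \<and> b n0 = 0 \<and> y = ps b" using sig
      by (intro exI[of _ "pk k"]) (auto simp: Pol_ps pk_def intro: bnd01)
  qed auto
  then obtain b where b: "bnd b" "b n0 = 0" "g = ps b" by blast
  have "norm (dd n0 - b n0) \<le> e * 2 ^ n0"
  proof (rule coeff_diff[OF bnd_dd b(1)])
    fix z :: complex assume "norm z = 1/2"
    then have "z \<in> cball 0 (1/2)" by simp
    then have "norm (ps dd z - ps b z) < e" using gz b(3) by auto
    then show "norm (ps dd z - ps b z) \<le> e" by simp
  qed
  moreover have "dd n0 = 1" using n0(1) by (simp add: dd_def)
  moreover have "e * 2 ^ n0 = 1/2" by (simp add: e_def power_one_over field_simps)
  ultimately show False using b(2) by simp
qed



lemma fix_del0: "opF (ps del0) = ps del0"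
proof -
  have "(\<lambda>m. del0 (collatzT m)) = del0" by (auto simp: fun_eq_iff del0_def T_zero_iff)
  then show ?thesis using opF_ps[OF bnd_del0] by simp
qed

lemma one_le_T: "1 \<le> collatzT m \<longleftrightarrow> 1 \<le> m"
  using T_zero_iff[of m] by (cases "m = 0") auto

lemma one_le_T': "Suc 0 \<le> collatzT m \<longleftrightarrow> Suc 0 \<le> m"
  using one_le_T by simp

lemma fix_dd: "opF (ps dd) = ps dd"
proof -
  have "(\<lambda>m. dd (collatzT m)) = dd" by (auto simp: fun_eq_iff dd_def one_le_T')
  then show ?thesis using opF_ps[OF bnd_dd] by simp
qed

lemma ps_dd_nz: "ps dd \<noteq> 0"
proof
  assume "ps dd = 0"
  then have "ps dd = ps (\<lambda>n. 0)" by (simp only: ps_zero)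
  moreover have b0: "bnd (\<lambda>n. 0::complex)" by (rule bnd01) simp
  ultimately have "dd 1 = 0" using ps_inj[OF bnd_dd b0] by blast
  then show False by (simp add: dd_def)
qed

lemma del0_dd_ne: "ps del0 \<noteq> ps dd"
proof
  assume "ps del0 = ps dd"
  then have "del0 0 = dd 0" by (rule ps_inj[OF bnd_del0 bnd_dd])
  then show False by (simp add: del0_def dd_def)
qed

lemma indep01: "vs.independent {ps del0, ps dd}"
proof (rule vs.independent_insertI)
  show "ps del0 \<notin> vs.span {ps dd}"
  proof
    assume A: "ps del0 \<in> vs.span {ps dd}"
    have "\<exists>b. bnd b \<and> b 0 = 0 \<and> ps del0 = ps b"
    proof (rule span_ps[OF A])
      fix y assume "y \<in> {ps dd}"
      then have "y = ps dd" by simp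
      then show "\<exists>b. bnd b \<and> b 0 = 0 \<and> y = ps b"
        using bnd_dd by (intro exI[of _ dd]) (simp add: dd_def)
    qed simp_all
    then obtain b where b: "bnd b" "b 0 = 0" "ps del0 = ps b" by blast
    have "del0 0 = b 0" by (rule ps_inj[OF bnd_del0 b(1) b(3)])
    then show False using b(2) by (simp add: del0_def)
  qed
  show "vs.independent {ps dd}"
  proof (rule vs.independent_insertI)
    show "ps dd \<notin> vs.span {}" using ps_dd_nz by simp
    show "vs.independent {}" by (rule vs.independent_empty)
  qed
qed

lemma b_fwd: assumes cc: CC shows "vs.dim {h \<in> AD. opF h = h} = 2"
proof (rule vs.dim_unique[of "{ps del0, ps dd}"])
  show "{ps del0, ps dd} \<subseteq> {h \<in> AD. opF h = h}"
    using ps_AD[OF bnd_del0] ps_AD[OF bnd_dd] fix_del0 fix_dd by simp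
  show "vs.independent {ps del0, ps dd}" by (rule indep01)
  show "card {ps del0, ps dd} = 2" using del0_dd_ne by simp
  show "{h \<in> AD. opF h = h} \<subseteq> vs.span {ps del0, ps dd}"
  proof
    fix h assume "h \<in> {h \<in> AD. opF h = h}"
    then have hA: "h \<in> AD" and hF: "opF h = h" by auto
    define a where "a = tcoeff h"
    have inv: "a (collatzT m) = a m" for m
      using opF_coeff[OF hA, of m] hF by (simp add: a_def)
    have invk: "a ((collatzT ^^ k) n) = a n" for k n
      by (induction k) (simp_all add: inv)
    have aeq: "a n = a 0 * del0 n + a 1 * dd n" for n
    proof (cases "n = 0")
      case True then show ?thesis by (simp add: del0_def dd_def)
    next
      case False
      then have "sigma_inf n < \<infinity>" using cc by simp
      then obtain k where "(collatzT ^^ k) n = 1" using sigma_fin by blast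
      then have "a n = a 1" using invk[of k n] by simp
      then show ?thesis using False by (simp add: del0_def dd_def)
    qed
    let ?b = "\<lambda>n. a 0 * del0 n + a 1 * dd n"
    have hb: "h = ps ?b"
    proof (rule ext)
      fix z show "h z = ps ?b z"
      proof (cases "z \<in> diskD")
        case True
        have "(\<lambda>n. a n * z ^ n) sums h z" using AD_sums[OF hA True] by (simp add: a_def)
        then have "h z = (\<Sum>n. a n * z ^ n)" by (rule sums_unique)
        also have "\<dots> = (\<Sum>n. ?b n * z ^ n)" by (simp only: aeq[symmetric])
        finally show ?thesis using True by (simp add: ps_def restrD_def)
      next
        case False
        then show ?thesis using hA by (simp add: AD_def ps_def restrD_def)
      qed
    qed
    also have "ps ?b = fscale (a 0) (ps del0) + fscale (a 1) (ps dd)"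
      by (simp add: ps_scale ps_add bnd_del0 bnd_dd bnd_scale)
    finally have "h = fscale (a 0) (ps del0) + fscale (a 1) (ps dd)" .
    moreover have "fscale (a 0) (ps del0) + fscale (a 1) (ps dd) \<in> vs.span {ps del0, ps dd}"
      by (intro vs.span_add vs.span_scale vs.span_base) simp_all
    ultimately show "h \<in> vs.span {ps del0, ps dd}" by simp
  qed
qed

lemma b_bwd: assumes "\<not> CC" shows "vs.dim {h \<in> AD. opF h = h} \<noteq> 2"
proof -
  obtain n0 where n0: "n0 \<ge> 1" "\<And>k. (collatzT ^^ k) n0 \<noteq> 1" using notCC[OF assms] by blast
  define Cs where "Cs = {n. \<exists>j k. (collatzT ^^ j) n = (collatzT ^^ k) n0}"
  define chi :: "nat \<Rightarrow> complex" where "chi n = (if n \<in> Cs then 1 else 0)" for n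
  have bchi: "bnd chi" by (rule bnd01) (simp add: chi_def)
  have CsT: "collatzT n \<in> Cs \<longleftrightarrow> n \<in> Cs" for n
  proof
    assume "collatzT n \<in> Cs"
    then obtain j k where "(collatzT ^^ j) (collatzT n) = (collatzT ^^ k) n0" by (auto simp: Cs_def)
    then have "(collatzT ^^ Suc j) n = (collatzT ^^ k) n0" by (simp only: Tpow_shift)
    then show "n \<in> Cs" unfolding Cs_def by blast
  next
    assume "n \<in> Cs"
    then obtain j k where jk: "(collatzT ^^ j) n = (collatzT ^^ k) n0" by (auto simp: Cs_def)
    have "(collatzT ^^ j) (collatzT n) = (collatzT ^^ Suc j) n" by (rule Tpow_shift)
    also have "\<dots> = collatzT ((collatzT ^^ k) n0)" using jk by simp
    also have "\<dots> = (collatzT ^^ Suc k) n0" by simp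
    finally show "collatzT n \<in> Cs" unfolding Cs_def by blast
  qed
  have one: "1 \<notin> Cs"
  proof
    assume "1 \<in> Cs"
    then obtain j k where jk: "(collatzT ^^ j) 1 = (collatzT ^^ k) n0" by (auto simp: Cs_def)
    from orbit1[of j] show False
    proof
      assume "(collatzT ^^ j) 1 = 1"
      then have "(collatzT ^^ k) n0 = 1" by (rule trans[OF jk[symmetric]])
      then show False using n0(2) by blast
    next
      assume "(collatzT ^^ j) 1 = 2"
      then have "(collatzT ^^ k) n0 = 2" by (rule trans[OF jk[symmetric]])
      then show False using never2[OF n0(2), of k] by blast
    qed
  qed
  have n0C: "n0 \<in> Cs" unfolding Cs_def by (rule CollectI, rule exI[of _ 0], rule exI[of _ 0]) simp
  have chi1: "chi 1 = 0" using one by (simp add: chi_def)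
  have chin0: "chi n0 = 1" using n0C by (simp add: chi_def)
  have fix_chi: "opF (ps chi) = ps chi"
  proof -
    have "(\<lambda>m. chi (collatzT m)) = chi" by (auto simp: fun_eq_iff chi_def CsT)
    then show ?thesis using opF_ps[OF bchi] by simp
  qed
  let ?S = "{ps chi, ps del0, ps dd}"
  let ?V = "{h \<in> AD. opF h = h}"
  have indep: "vs.independent ?S"
  proof (rule vs.independent_insertI[OF _ indep01])
    show "ps chi \<notin> vs.span {ps del0, ps dd}"
    proof
      assume A: "ps chi \<in> vs.span {ps del0, ps dd}"
      have "\<exists>b. bnd b \<and> b 1 = b n0 \<and> ps chi = ps b"
      proof (rule span_ps[OF A])
        fix y assume "y \<in> {ps del0, ps dd}"
        then have "y = ps del0 \<or> y = ps dd" by simp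
        then show "\<exists>b. bnd b \<and> b 1 = b n0 \<and> y = ps b"
        proof
          assume "y = ps del0" then show ?thesis
            using bnd_del0 n0(1) by (intro exI[of _ del0]) (simp add: del0_def)
        next
          assume "y = ps dd" then show ?thesis
            using bnd_dd n0(1) by (intro exI[of _ dd]) (simp add: dd_def)
        qed
      qed simp_all
      then obtain b where b: "bnd b" "b 1 = b n0" "ps chi = ps b" by blast
      have "chi 1 = b 1" "chi n0 = b n0" using ps_inj[OF bchi b(1) b(3)] by blast+
      then show False using b(2) chi1 chin0 by simp
    qed
  qed
  have SV: "?S \<subseteq> ?V"
    using ps_AD[OF bnd_del0] ps_AD[OF bnd_dd] ps_AD[OF bchi] fix_del0 fix_dd fix_chi by simp
  have ne1: "ps chi \<noteq> ps del0"
  proof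
    assume "ps chi = ps del0"
    then have "chi n0 = del0 n0" by (rule ps_inj[OF bchi bnd_del0])
    then show False using chin0 n0(1) by (simp add: del0_def)
  qed
  have ne2: "ps chi \<noteq> ps dd"
  proof
    assume "ps chi = ps dd"
    then have "chi 1 = dd 1" by (rule ps_inj[OF bchi bnd_dd])
    then show False using chi1 by (simp add: dd_def)
  qed
  have cS: "card ?S = 3" using ne1 ne2 del0_dd_ne by simp
  obtain B where B: "?S \<subseteq> B" "B \<subseteq> ?V" "vs.independent B" "?V \<subseteq> vs.span B"
    by (rule vs.maximal_independent_subset_extend[OF SV indep])
  have "vs.span B = vs.span ?V"
  proof (rule vs.span_eq[THEN iffD2], rule conjI)
    show "B \<subseteq> vs.span ?V" using B(2) vs.span_superset by blast
    show "?V \<subseteq> vs.span B" by (rule B(4))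
  qed
  then have dimB: "vs.dim ?V = card B" by (rule vs.dim_eq_card[OF _ B(3)])
  show ?thesis
  proof (cases "finite B")
    case True
    then have "card ?S \<le> card B" by (rule card_mono[OF _ B(1)])
    then show ?thesis using dimB cS by simp
  next
    case False
    then show ?thesis using dimB by simp
  qed
qed

theorem mainTheorem12:
  shows "((\<forall>n::nat. n \<ge> 1 \<longrightarrow> sigma_inf n < \<infinity>)
      \<longleftrightarrow> vector_space.dim fscale {h \<in> AD. opF h = h} = 2)
    \<and> ((\<forall>n::nat. n \<ge> 1 \<longrightarrow> sigma_inf n < \<infinity>)
      \<longleftrightarrow> restrD (\<lambda>z. z / (1 - z)) \<in> Zspace)
    \<and> ((\<forall>n::nat. n \<ge> 1 \<longrightarrow> sigma_inf n < \<infinity>)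
      \<longleftrightarrow> (\<forall>K. compact K \<and> K \<subseteq> diskD \<longrightarrow>
             uniform_limit K (\<lambda>m. (opF ^^ m) (restrD (\<lambda>z. z + z ^ 2)))
                             (\<lambda>z. z / (1 - z)) sequentially))"
proof (cases CC)
  case True
  then show ?thesis using b_fwd c_fwd d_fwd by blast
next
  case False
  then show ?thesis using b_bwd[OF False] c_bwd[OF False] d_bwd[OF False] by blast
qed


end
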